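(* Let $\Delta_1,\Delta_2$ be simplicial complexes on $[n]$ and let $A,B,A',B'\subseteq[n]$ be nonempty sets such that $A\cap B=\emptyset$, $A'\cap B'=\emptyset$, and neither $A\cup B$ nor $A'\cup B'$ meets the vertex set of $\Delta_1\cup\Delta_2$. Then $$\tilde H_i\big((A*\Delta_1)\cup(B*\Delta_2);\mathbb{K}\big)\cong\tilde H_i\big((A'*\Delta_1)\cup(B'*\Delta_2);\mathbb{K}\big)\quad\text{for all } i>0.$$
   Context: A simplicial complex on $[n]$ is a finite family of subsets of $[n]$ closed under taking subsets (singletons need not belong to it); its vertex set is the union of its faces. For a nonempty $A\subseteq[n]$ and a simplicial complex $\Delta$ on $[n]$, the cone $A*\Delta$ is the simplicial complex whose facets are the sets $A\cup F$ with $F$ a facet of $\Delta$. $\tilde H_i(\,\cdot\,;\mathbb{K})$ denotes reduced simplicial homology with coefficients in the field $\mathbb{K}$. *)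

theory Defs
  imports Main
begin

definition simplicial_complex :: "nat \<Rightarrow> nat set set \<Rightarrow> bool" where
  "simplicial_complex n \<Delta> \<longleftrightarrow> \<Delta> \<subseteq> Pow {1..n} \<and> (\<forall>F\<in>\<Delta>. \<forall>G. G \<subseteq> F \<longrightarrow> G \<in> \<Delta>)"

definition vertex_set :: "nat set set \<Rightarrow> nat set" where
  "vertex_set \<Delta> = \<Union>\<Delta>"

definition facets :: "nat set set \<Rightarrow> nat set set" where
  "facets \<Delta> = {F \<in> \<Delta>. \<forall>G\<in>\<Delta>. F \<subseteq> G \<longrightarrow> G = F}"

definition cone :: "nat set \<Rightarrow> nat set set \<Rightarrow> nat set set" where
  "cone A \<Delta> = {G. \<exists>F\<in>facets \<Delta>. G \<subseteq> A \<union> F}"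

text \<open>A face F of cardinality
  d+1 has dimension d; the empty face has dimension -1 (augmented complex, giving
  reduced homology).\<close>
definition chains :: "nat set set \<Rightarrow> int \<Rightarrow> (nat set \<Rightarrow> 'k::field) set" where
  "chains \<Delta> d = {c. \<forall>F. c F \<noteq> 0 \<longrightarrow> F \<in> \<Delta> \<and> int (card F) = d + 1}"

text \<open>Boundary map, faces oriented by the natural order of the vertices:
  d(e_F) = sum over v in F of (-1)^(number of u in F with u < v) e_(F - {v}).\<close>
definition bd :: "nat set set \<Rightarrow> (nat set \<Rightarrow> 'k::field) \<Rightarrow> (nat set \<Rightarrow> 'k)" where
  "bd \<Delta> c = (\<lambda>G. if G \<in> \<Delta> then
       (\<Sum>v\<in>vertex_set \<Delta> - G. (-1) ^ card {u\<in>G. u < v} * c (insert v G))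
     else 0)"

definition cycles :: "nat set set \<Rightarrow> int \<Rightarrow> (nat set \<Rightarrow> 'k::field) set" where
  "cycles \<Delta> d = {c \<in> chains \<Delta> d. bd \<Delta> c = (\<lambda>G. 0)}"

definition boundaries :: "nat set set \<Rightarrow> int \<Rightarrow> (nat set \<Rightarrow> 'k::field) set" where
  "boundaries \<Delta> d = bd \<Delta> ` chains \<Delta> (d + 1)"

definition hclass :: "nat set set \<Rightarrow> int \<Rightarrow> (nat set \<Rightarrow> 'k::field) \<Rightarrow> (nat set \<Rightarrow> 'k) set" where
  "hclass \<Delta> d z = (\<lambda>b F. z F + b F) ` boundaries \<Delta> d"

definition reduced_homology :: "nat set set \<Rightarrow> int \<Rightarrow> (nat set \<Rightarrow> 'k::field) set set" where
  "reduced_homology \<Delta> d = hclass \<Delta> d ` cycles \<Delta> d"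

text \<open>Isomorphism of 'k-vector spaces H~_d(Delta1;'k) and H~_e(Delta2;'k): a bijection
  between the quotient spaces which is additive and 'k-homogeneous (operations on
  cosets computed via representatives).\<close>
definition homology_iso ::
  "'k::field itself \<Rightarrow> nat set set \<Rightarrow> int \<Rightarrow> nat set set \<Rightarrow> int \<Rightarrow> bool" where
  "homology_iso TYPE('k) \<Delta>1 d1 \<Delta>2 d2 \<longleftrightarrow>
    (\<exists>f :: (nat set \<Rightarrow> 'k) set \<Rightarrow> (nat set \<Rightarrow> 'k) set.
       bij_betw f (reduced_homology \<Delta>1 d1) (reduced_homology \<Delta>2 d2) \<and>
       (\<forall>z w z' w'. z \<in> cycles \<Delta>1 d1 \<longrightarrow> w \<in> cycles \<Delta>1 d1 \<longrightarrow>
           z' \<in> cycles \<Delta>2 d2 \<longrightarrow> w' \<in> cycles \<Delta>2 d2 \<longrightarrow>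
           f (hclass \<Delta>1 d1 z) = hclass \<Delta>2 d2 z' \<longrightarrow>
           f (hclass \<Delta>1 d1 w) = hclass \<Delta>2 d2 w' \<longrightarrow>
           f (hclass \<Delta>1 d1 (\<lambda>F. z F + w F)) = hclass \<Delta>2 d2 (\<lambda>F. z' F + w' F)) \<and>
       (\<forall>a z z'. z \<in> cycles \<Delta>1 d1 \<longrightarrow> z' \<in> cycles \<Delta>2 d2 \<longrightarrow>
           f (hclass \<Delta>1 d1 z) = hclass \<Delta>2 d2 z' \<longrightarrow>
           f (hclass \<Delta>1 d1 (\<lambda>F. a * z F)) = hclass \<Delta>2 d2 (\<lambda>F. a * z' F)))"

end

theory Submission
  imports Defs
begin

definition sg :: "nat set \<Rightarrow> nat \<Rightarrow> 'k::field" where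
  "sg G x = (-1) ^ card {u\<in>G. u < x}"

lemma sg_insert:
  assumes "w \<notin> H"
  shows "sg (insert w H) x = (if w < x then - sg H x else (sg H x :: 'k::field))"
proof -
  have fin: "finite {u\<in>H. u<x}" by (rule finite_subset[of _ "{..<x}"]) auto
  show ?thesis
  proof (cases "w<x")
    case True
    then have "{u\<in>insert w H. u<x} = insert w {u\<in>H. u<x}" by auto
    then show ?thesis using True fin assms by (simp add: sg_def card_insert_disjoint)
  next
    case False
    then have "{u\<in>insert w H. u<x} = {u\<in>H. u<x}" by auto
    then show ?thesis using False by (simp add: sg_def)
  qed
qed

lemma sg_sq: "sg G x * sg G x = (1::'k::field)"
  by (simp add: sg_def flip: power_mult_distrib)

lemma bd_alt: "bd K c = (\<lambda>G. if G \<in> K then \<Sum>w\<in>\<Union>K - G. sg G w * c (insert w G) else 0)"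
  unfolding bd_def sg_def vertex_set_def by (rule refl)

definition supp :: "nat set set \<Rightarrow> (nat set \<Rightarrow> 'k::field) \<Rightarrow> bool" where
  "supp K c \<longleftrightarrow> (\<forall>G. c G \<noteq> 0 \<longrightarrow> G \<in> K)"

definition down :: "nat set set \<Rightarrow> bool" where
  "down K \<longleftrightarrow> (\<forall>F\<in>K. \<forall>G. G \<subseteq> F \<longrightarrow> G \<in> K)"

lemma double_sum_zero:
  assumes "finite S" "\<And>w u. w\<in>S \<Longrightarrow> u\<in>S \<Longrightarrow> w\<noteq>u \<Longrightarrow> g w u + g u w = (0::'a::comm_ring)"
  shows "(\<Sum>w\<in>S. \<Sum>u\<in>S-{w}. g w u) = 0"
  using assms
proof (induction S rule: finite_induct)
  case empty
  show ?case by simp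
next
  case (insert x S)
  have IH: "(\<Sum>w\<in>S. \<Sum>u\<in>S-{w}. g w u) = 0" using insert by auto
  have e1: "insert x S - {x} = S" using insert by auto
  have "(\<Sum>w\<in>insert x S. \<Sum>u\<in>insert x S-{w}. g w u)
      = (\<Sum>u\<in>S. g x u) + (\<Sum>w\<in>S. \<Sum>u\<in>insert x S - {w}. g w u)"
    using insert e1 by (simp add: sum.insert)
  also have "(\<Sum>w\<in>S. \<Sum>u\<in>insert x S - {w}. g w u) = (\<Sum>w\<in>S. g w x + (\<Sum>u\<in>S-{w}. g w u))"
  proof (rule sum.cong)
    fix w assume "w \<in> S"
    then have "insert x S - {w} = insert x (S - {w})" "x \<notin> S - {w}" using insert by auto
    then show "(\<Sum>u\<in>insert x S - {w}. g w u) = g w x + (\<Sum>u\<in>S-{w}. g w u)"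
      using insert by (simp add: sum.insert)
  qed simp
  also have "\<dots> = (\<Sum>w\<in>S. g w x)" using IH by (simp add: sum.distrib)
  finally have "(\<Sum>w\<in>insert x S. \<Sum>u\<in>insert x S-{w}. g w u) = (\<Sum>u\<in>S. g x u + g u x)"
    by (simp add: sum.distrib)
  also have "\<dots> = 0" by (rule sum.neutral) (use insert in auto)
  finally show ?case .
qed

lemma bdbd:
  assumes "down K" "finite (\<Union>K)" "supp K c"
  shows "bd K (bd K (c :: nat set \<Rightarrow> 'k::field)) = (\<lambda>_. 0)"
proof
  fix G
  show "bd K (bd K c) G = 0"
  proof (cases "G \<in> K")
    case False then show ?thesis by (simp add: bd_alt)
  next
    case True
    define S where "S = \<Union>K - G"
    have finS: "finite S" using assms(2) by (simp add: S_def)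
    have inner: "bd K c (insert w G) = (\<Sum>u\<in>S-{w}. sg (insert w G) u * c (insert u (insert w G)))"
      if "w \<in> S" for w
    proof (cases "insert w G \<in> K")
      case True
      have "\<Union>K - insert w G = S - {w}" by (auto simp: S_def)
      then show ?thesis using True by (simp add: bd_alt)
    next
      case False
      have "c (insert u (insert w G)) = 0" for u
      proof (rule ccontr)
        assume "c (insert u (insert w G)) \<noteq> 0"
        then have "insert u (insert w G) \<in> K" using assms(3) by (auto simp: supp_def)
        then have "insert w G \<in> K" using assms(1) unfolding down_def by (meson subset_insertI)
        then show False using False by simp
      qed
      then show ?thesis using False by (simp add: bd_alt)
    qed
    have "bd K (bd K c) G = (\<Sum>w\<in>S. sg G w * bd K c (insert w G))"
      using True by (simp add: bd_alt S_def)
    also have "\<dots> = (\<Sum>w\<in>S. \<Sum>u\<in>S-{w}. sg G w * sg (insert w G) u * c (insert u (insert w G)))"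
      by (rule sum.cong) (simp_all add: inner sum_distrib_left mult.assoc)
    also have "\<dots> = 0"
    proof (rule double_sum_zero[OF finS])
      fix w u assume wu: "w \<in> S" "u \<in> S" "w \<noteq> u"
      then have nG: "w \<notin> G" "u \<notin> G" by (auto simp: S_def)
      have ic: "insert w (insert u G) = insert u (insert w G)" by auto
      show "sg G w * sg (insert w G) u * c (insert u (insert w G)) +
            sg G u * sg (insert u G) w * c (insert w (insert u G)) = 0"
        using wu nG unfolding ic by (cases "w < u") (auto simp: sg_insert)
    qed
    finally show ?thesis .
  qed
qed

definition hop :: "nat \<Rightarrow> nat \<Rightarrow> (nat set \<Rightarrow> 'k::field) \<Rightarrow> (nat set \<Rightarrow> 'k)" where
  "hop a v c = (\<lambda>G. if a \<in> G \<and> v \<in> G then sg (G - {a}) a * c (G - {a}) else 0)"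

lemma homotopy:
  assumes "down L" "finite (\<Union>L)" "a \<noteq> v" "\<And>G. G \<in> L \<Longrightarrow> v \<in> G \<Longrightarrow> insert a G \<in> L"
    and "supp L c" "v \<in> G"
  shows "bd L (hop a v c) G + hop a v (bd L c) G = (c G :: 'k::field)"
proof (cases "a \<in> G")
  case False
  have h0: "hop a v (bd L c) G = 0" using False by (simp add: hop_def)
  show ?thesis
  proof (cases "G \<in> L")
    case gn: False
    then have "c G = 0" using assms(5) by (auto simp: supp_def)
    then show ?thesis using gn h0 by (simp add: bd_alt)
  next
    case True
    have aL: "a \<in> \<Union>L - G" using assms(4)[OF True assms(6)] False by auto
    have "bd L (hop a v c) G = (\<Sum>w\<in>\<Union>L - G. sg G w * hop a v c (insert w G))"
      using True by (simp add: bd_alt)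
    also have "\<dots> = (\<Sum>w\<in>\<Union>L - G. if w = a then c G else 0)"
    proof (rule sum.cong)
      fix w assume "w \<in> \<Union>L - G"
      show "sg G w * hop a v c (insert w G) = (if w = a then c G else 0)"
      proof (cases "w = a")
        case True
        have "insert a G - {a} = G" using False by auto
        then show ?thesis using True assms(6) by (simp add: hop_def mult.assoc[symmetric] sg_sq)
      next
        case wa: False
        then show ?thesis using False by (simp add: hop_def)
      qed
    qed simp
    also have "\<dots> = c G" using aL assms(2) by simp
    finally show ?thesis using h0 by simp
  qed
next
  case True
  define H where "H = G - {a}"
  have GH: "G = insert a H" "a \<notin> H" "v \<in> H" using True assms(3,6) by (auto simp: H_def)
  have h1: "hop a v (bd L c) G = sg H a * bd L c H"
    using True assms(6) by (simp add: hop_def H_def)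
  show ?thesis
  proof (cases "G \<in> L")
    case gn: False
    then have "c G = 0" using assms(5) by (auto simp: supp_def)
    moreover have "H \<notin> L" using assms(4)[of H] GH gn by auto
    ultimately show ?thesis using gn h1 by (simp add: bd_alt)
  next
    case gL: True
    have HL: "H \<in> L" using assms(1) gL by (auto simp: down_def H_def)
    have aU: "a \<in> \<Union>L" using gL True by auto
    have e: "\<Union>L - H = insert a (\<Union>L - G)" "a \<notin> \<Union>L - G" using GH aU by auto
    have fin: "finite (\<Union>L - G)" using assms(2) by simp
    have "bd L c H = (\<Sum>w\<in>insert a (\<Union>L - G). sg H w * c (insert w H))"
      using HL e(1) by (simp add: bd_alt)
    also have "\<dots> = sg H a * c (insert a H) + (\<Sum>w\<in>\<Union>L - G. sg H w * c (insert w H))"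
      by (rule sum.insert[OF fin e(2)])
    finally have "bd L c H = sg H a * c G + (\<Sum>w\<in>\<Union>L - G. sg H w * c (insert w H))"
      using GH(1) by simp
    then have h1': "hop a v (bd L c) G = c G + (\<Sum>w\<in>\<Union>L - G. sg H a * sg H w * c (insert w H))"
      using h1 by (simp add: distrib_left sum_distrib_left mult.assoc[symmetric] sg_sq)
    have "bd L (hop a v c) G = (\<Sum>w\<in>\<Union>L - G. sg G w * hop a v c (insert w G))"
      using gL by (simp add: bd_alt)
    also have "\<dots> = (\<Sum>w\<in>\<Union>L - G. - (sg H a * sg H w * c (insert w H)))"
    proof (rule sum.cong)
      fix w assume w: "w \<in> \<Union>L - G"
      then have wa: "w \<noteq> a" "w \<notin> H" using GH by auto
      have e2: "insert w G - {a} = insert w H" using GH wa by auto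
      have "hop a v c (insert w G) = sg (insert w H) a * c (insert w H)"
        using True assms(6) e2 by (simp add: hop_def)
      then show "sg G w * hop a v c (insert w G) = - (sg H a * sg H w * c (insert w H))"
        using wa GH by (cases "w < a") (auto simp: sg_insert)
    qed simp
    finally show ?thesis using h1' by (simp add: sum_negf)
  qed
qed


lemma bd_diff: "bd K (\<lambda>F. x F - y F) = (\<lambda>G. bd K x G - bd K (y :: nat set \<Rightarrow> 'k::field) G)"
  by (rule ext) (simp add: bd_alt sum_subtractf right_diff_distrib)

lemma bd_add: "bd K (\<lambda>F. x F + y F) = (\<lambda>G. bd K x G + bd K (y :: nat set \<Rightarrow> 'k::field) G)"
  by (rule ext) (simp add: bd_alt sum.distrib distrib_left)

lemma bd_scale: "bd K (\<lambda>F. s * x F) = (\<lambda>G. s * bd K (x :: nat set \<Rightarrow> 'k::field) G)"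
  by (rule ext) (simp add: bd_alt sum_distrib_left mult.left_commute)

lemma bd_zero: "bd K (\<lambda>F. 0) = (\<lambda>G. 0 :: 'k::field)"
  by (rule ext) (simp add: bd_alt)

lemma bd_neg: "bd K (\<lambda>F. - x F) = (\<lambda>G. - bd K (x :: nat set \<Rightarrow> 'k::field) G)"
  by (rule ext) (simp add: bd_alt sum_negf)

lemma hop_diff: "hop a v (\<lambda>F. x F - y F) = (\<lambda>G. hop a v x G - hop a v (y :: nat set \<Rightarrow> 'k::field) G)"
  by (rule ext) (simp add: hop_def right_diff_distrib)

lemma hop_zero: "hop a v (\<lambda>F. 0) = (\<lambda>G. 0 :: 'k::field)"
  by (rule ext) (simp add: hop_def)

lemma chains_supp: "c \<in> chains K d \<Longrightarrow> supp K c"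
  by (auto simp: chains_def supp_def)

lemma chains_diff: "x \<in> chains K d \<Longrightarrow> y \<in> chains K d \<Longrightarrow> (\<lambda>F. x F - y F) \<in> chains K d"
  by (auto simp: chains_def) (metis eq_iff_diff_eq_0)+

lemma chains_add: "x \<in> chains K d \<Longrightarrow> y \<in> chains K d \<Longrightarrow> (\<lambda>F. x F + y F) \<in> chains K d"
  by (auto simp: chains_def) (metis add.right_neutral)+

lemma chains_scale: "x \<in> chains K d \<Longrightarrow> (\<lambda>F. s * x F) \<in> chains K d"
  by (auto simp: chains_def)

lemma chains_neg: "x \<in> chains K d \<Longrightarrow> (\<lambda>F. - x F) \<in> chains K d"
  by (auto simp: chains_def)

lemma chains_zero: "(\<lambda>F. 0) \<in> chains K d"
  by (auto simp: chains_def)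

lemma bd_chains:
  assumes "finite (\<Union>K)" "c \<in> chains K (d+1)"
  shows "bd K c \<in> chains K d"
  unfolding chains_def
proof (intro CollectI allI impI)
  fix G assume nz: "bd K c G \<noteq> (0::'a)"
  then have GK: "G \<in> K" by (auto simp: bd_alt split: if_splits)
  then have "(\<Sum>w\<in>\<Union>K - G. sg G w * c (insert w G)) \<noteq> 0" using nz by (simp add: bd_alt)
  then obtain w where w: "w \<in> \<Union>K - G" "sg G w * c (insert w G) \<noteq> 0"
    by (meson sum.not_neutral_contains_not_neutral)
  then have "c (insert w G) \<noteq> 0" by auto
  then have "int (card (insert w G)) = d + 1 + 1" using assms(2) by (auto simp: chains_def)
  moreover have "finite G" using GK assms(1) by (meson Union_upper finite_subset)
  ultimately have "int (card G) = d + 1" using w(1) by simp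
  then show "G \<in> K \<and> int (card G) = d + 1" using GK by simp
qed

lemma bd_supp: "supp K (bd K c)"
  by (auto simp: supp_def bd_alt split: if_splits)

lemma bound_zero: "(\<lambda>F. 0) \<in> boundaries K d"
  unfolding boundaries_def by (rule image_eqI[of _ _ "\<lambda>F. 0"]) (simp_all add: bd_zero chains_zero)

lemma bound_add: "x \<in> boundaries K d \<Longrightarrow> y \<in> boundaries K d \<Longrightarrow> (\<lambda>F. x F + y F) \<in> boundaries K d"
  unfolding boundaries_def
proof -
  assume "x \<in> bd K ` chains K (d + 1)" "y \<in> bd K ` chains K (d + 1)"
  then obtain p q where "p \<in> chains K (d+1)" "q \<in> chains K (d+1)" "x = bd K p" "y = bd K q" by blast
  then show "(\<lambda>F. x F + y F) \<in> bd K ` chains K (d + 1)"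
    by (intro image_eqI[of _ _ "\<lambda>F. p F + q F"]) (simp_all add: bd_add chains_add)
qed

lemma bound_scale: "x \<in> boundaries K d \<Longrightarrow> (\<lambda>F. s * x F) \<in> boundaries K d"
  unfolding boundaries_def
proof -
  assume "x \<in> bd K ` chains K (d + 1)"
  then obtain p where "p \<in> chains K (d+1)" "x = bd K p" by blast
  then show "(\<lambda>F. s * x F) \<in> bd K ` chains K (d + 1)"
    by (intro image_eqI[of _ _ "\<lambda>F. s * p F"]) (simp_all add: bd_scale chains_scale)
qed

lemma bound_neg: "x \<in> boundaries K d \<Longrightarrow> (\<lambda>F. - x F) \<in> boundaries K d"
  using bound_scale[of x K d "-1"] by simp

lemma bound_diff: "x \<in> boundaries K d \<Longrightarrow> y \<in> boundaries K d \<Longrightarrow> (\<lambda>F. x F - y F) \<in> boundaries K d"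
  using bound_add[OF _ bound_neg, of x K d y] by simp

lemma cycles_add: "x \<in> cycles K d \<Longrightarrow> y \<in> cycles K d \<Longrightarrow> (\<lambda>F. x F + y F) \<in> cycles K d"
  by (simp add: cycles_def chains_add bd_add)

lemma cycles_scale: "x \<in> cycles K d \<Longrightarrow> (\<lambda>F. s * x F) \<in> cycles K d"
  by (simp add: cycles_def chains_scale bd_scale)

lemma hclass_eq:
  "hclass K d x = hclass K d y \<longleftrightarrow> (\<lambda>F. x F - y F) \<in> boundaries K d"
proof
  assume h: "hclass K d x = hclass K d y"
  have "x \<in> hclass K d x" unfolding hclass_def
    by (rule image_eqI[of _ _ "\<lambda>F. 0"]) (simp_all add: bound_zero)
  then have "x \<in> hclass K d y" using h by simp
  then obtain b where b: "b \<in> boundaries K d" "x = (\<lambda>F. y F + b F)" by (auto simp: hclass_def)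
  then have "(\<lambda>F. x F - y F) = b" by auto
  then show "(\<lambda>F. x F - y F) \<in> boundaries K d" using b by simp
next
  assume h: "(\<lambda>F. x F - y F) \<in> boundaries K d"
  have h': "(\<lambda>F. y F - x F) \<in> boundaries K d" using bound_neg[OF h] by simp
  have sub: "hclass K d p \<subseteq> hclass K d q" if "(\<lambda>F. p F - q F) \<in> boundaries K d" for p q
  proof
    fix t assume "t \<in> hclass K d p"
    then obtain b where b: "b \<in> boundaries K d" "t = (\<lambda>F. p F + b F)" by (auto simp: hclass_def)
    have m: "(\<lambda>F. (\<lambda>F. p F - q F) F + b F) \<in> boundaries K d" by (rule bound_add[OF that b(1)])
    have "t = (\<lambda>b F. q F + b F) (\<lambda>F. (\<lambda>F. p F - q F) F + b F)" using b by auto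
    then show "t \<in> hclass K d q" unfolding hclass_def by (rule rev_image_eqI[OF m])
  qed
  show "hclass K d x = hclass K d y" using sub[OF h] sub[OF h'] by blast
qed

lemma iso_gen:
  fixes r :: "(nat set \<Rightarrow> 'k::field) \<Rightarrow> (nat set \<Rightarrow> 'k)"
  assumes Z: "cycles K d \<subseteq> (cycles L d :: (nat set \<Rightarrow> 'k) set)"
    and B: "boundaries K d \<subseteq> (boundaries L d :: (nat set \<Rightarrow> 'k) set)"
    and rZ: "\<And>z :: nat set \<Rightarrow> 'k. z \<in> cycles L d \<Longrightarrow> r z \<in> cycles K d"
    and rB: "\<And>b :: nat set \<Rightarrow> 'k. b \<in> boundaries L d \<Longrightarrow> r b \<in> boundaries K d"
    and rid: "\<And>z :: nat set \<Rightarrow> 'k. z \<in> cycles K d \<Longrightarrow> r z = z"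
    and rh: "\<And>z :: nat set \<Rightarrow> 'k. z \<in> cycles L d \<Longrightarrow> (\<lambda>F. r z F - z F) \<in> boundaries L d"
    and rdiff: "\<And>x y :: nat set \<Rightarrow> 'k. r (\<lambda>F. x F - y F) = (\<lambda>F. r x F - r y F)"
  shows "homology_iso TYPE('k) K d L d"
proof -
  define f where "f X = \<Union> (hclass L d ` X)" for X :: "(nat set \<Rightarrow> 'k) set"
  have fcl: "f (hclass K d x) = hclass L d x" for x
  proof -
    have "hclass L d (\<lambda>F. x F + b F) = hclass L d x" if "b \<in> boundaries K d" for b
    proof -
      have "(\<lambda>F. x F + b F - x F) = b" by simp
      then show ?thesis using B that by (simp add: hclass_eq subset_iff)
    qed
    moreover have "boundaries K d \<noteq> {}" using bound_zero by blast
    ultimately have "(hclass L d \<circ> (\<lambda>b F. x F + b F)) ` boundaries K d = {hclass L d x}" by auto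
    then show ?thesis unfolding f_def hclass_def[of K] image_comp by simp
  qed
  have bij: "bij_betw f (reduced_homology K d) (reduced_homology L d)"
    unfolding bij_betw_def
  proof
    show "inj_on f (reduced_homology K d)"
    proof (rule inj_onI)
      fix X Y :: "(nat set \<Rightarrow> 'k) set" assume X: "X \<in> reduced_homology K d" and Y: "Y \<in> reduced_homology K d" and fXY: "f X = f Y"
      obtain z where z: "z \<in> cycles K d" "X = hclass K d z" using X by (auto simp: reduced_homology_def)
      obtain w where w: "w \<in> cycles K d" "Y = hclass K d w" using Y by (auto simp: reduced_homology_def)
      have "(\<lambda>F. z F - w F) \<in> boundaries L d" using fXY z w fcl hclass_eq by metis
      then have "r (\<lambda>F. z F - w F) \<in> boundaries K d" by (rule rB)
      then have "(\<lambda>F. z F - w F) \<in> boundaries K d" using rdiff rid z w by simp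
      then show "X = Y" using z w hclass_eq by metis
    qed
  next
    show "f ` reduced_homology K d = reduced_homology L d"
    proof
      show "f ` reduced_homology K d \<subseteq> reduced_homology L d"
        using Z by (auto simp: reduced_homology_def fcl)
    next
      show "reduced_homology L d \<subseteq> f ` reduced_homology K d"
      proof
        fix Y :: "(nat set \<Rightarrow> 'k) set" assume "Y \<in> reduced_homology L d"
        then obtain z where z: "z \<in> cycles L d" "Y = hclass L d z" by (auto simp: reduced_homology_def)
        have "f (hclass K d (r z)) = Y" using fcl z rh hclass_eq by metis
        moreover have "hclass K d (r z) \<in> reduced_homology K d" using rZ[OF z(1)] by (simp add: reduced_homology_def)
        ultimately show "Y \<in> f ` reduced_homology K d" by blast
      qed
    qed
  qed
  have add: "f (hclass K d (\<lambda>F. z F + w F)) = hclass L d (\<lambda>F. z' F + w' F)"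
    if "f (hclass K d z) = hclass L d z'" "f (hclass K d w) = hclass L d w'" for z w z' w'
  proof -
    have 1: "(\<lambda>F. z F - z' F) \<in> boundaries L d" using that(1) fcl hclass_eq by metis
    have 2: "(\<lambda>F. w F - w' F) \<in> boundaries L d" using that(2) fcl hclass_eq by metis
    have "(\<lambda>F. (z F + w F) - (z' F + w' F)) = (\<lambda>F. (\<lambda>F. z F - z' F) F + (\<lambda>F. w F - w' F) F)"
      by (rule ext) (simp add: algebra_simps)
    then have "(\<lambda>F. (z F + w F) - (z' F + w' F)) \<in> boundaries L d" using bound_add[OF 1 2] by simp
    then show ?thesis using fcl hclass_eq by metis
  qed
  have scale: "f (hclass K d (\<lambda>F. s * z F)) = hclass L d (\<lambda>F. s * z' F)"
    if "f (hclass K d z) = hclass L d z'" for z z' s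
  proof -
    have 1: "(\<lambda>F. z F - z' F) \<in> boundaries L d" using that(1) fcl hclass_eq by metis
    have "(\<lambda>F. s * z F - s * z' F) = (\<lambda>F. s * (\<lambda>F. z F - z' F) F)"
      by (rule ext) (simp add: algebra_simps)
    then have "(\<lambda>F. s * z F - s * z' F) \<in> boundaries L d" using bound_scale[OF 1] by simp
    then show ?thesis using fcl hclass_eq by metis
  qed
  show ?thesis unfolding homology_iso_def using bij add scale by blast
qed


lemma bd_mono:
  assumes "K \<subseteq> L" "down K" "finite (\<Union>L)" "supp K c"
  shows "bd L c = bd K (c :: nat set \<Rightarrow> 'k::field)"
proof (rule ext)
  fix G
  show "bd L c G = bd K c G"
  proof (cases "G \<in> K")
    case True
    then have GL: "G \<in> L" using assms(1) by auto
    have "(\<Sum>w\<in>\<Union>L - G. sg G w * c (insert w G)) = (\<Sum>w\<in>\<Union>K - G. sg G w * c (insert w G))"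
    proof (rule sum.mono_neutral_right)
      show "finite (\<Union>L - G)" using assms(3) by simp
      show "\<Union>K - G \<subseteq> \<Union>L - G" using assms(1) by auto
      show "\<forall>w\<in>(\<Union>L - G) - (\<Union>K - G). sg G w * c (insert w G) = 0"
      proof
        fix w assume w: "w \<in> (\<Union>L - G) - (\<Union>K - G)"
        have "c (insert w G) = 0"
        proof (rule ccontr)
          assume "c (insert w G) \<noteq> 0"
          then have "insert w G \<in> K" using assms(4) by (auto simp: supp_def)
          then show False using w by auto
        qed
        then show "sg G w * c (insert w G) = 0" by simp
      qed
    qed
    then show ?thesis using True GL by (simp add: bd_alt)
  next
    case False
    have "c (insert w G) = 0" for w
    proof (rule ccontr)
      assume "c (insert w G) \<noteq> 0"
      then have "insert w G \<in> K" using assms(4) by (auto simp: supp_def)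
      then have "G \<in> K" using assms(2) unfolding down_def by (meson subset_insertI)
      then show False using False by simp
    qed
    then show ?thesis using False by (simp add: bd_alt)
  qed
qed

lemma chains_mono: "K \<subseteq> L \<Longrightarrow> chains K e \<subseteq> chains L e"
  by (auto simp: chains_def)

lemma step_abs:
  assumes dK: "down K" and dL: "down L" and fin: "finite (\<Union>L)" and sub: "K \<subseteq> L" and av: "a \<noteq> v"
    and i: "\<And>G. G \<in> L \<Longrightarrow> v \<in> G \<Longrightarrow> insert a G \<in> L"
    and ii: "\<And>G. G \<in> L \<Longrightarrow> v \<notin> G \<Longrightarrow> G \<in> K"
    and iii: "\<And>G. G \<in> K \<Longrightarrow> v \<notin> G"
  shows "homology_iso TYPE('k::field) K d L d"
proof -
  define r :: "(nat set \<Rightarrow> 'k) \<Rightarrow> (nat set \<Rightarrow> 'k)" where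
    "r c = (\<lambda>G. c G - bd L (hop a v c) G - hop a v (bd L c) G)" for c
  have bdm: "bd L c = bd K c" if "supp K c" for c :: "nat set \<Rightarrow> 'k"
    using bd_mono[OF sub dK fin that] .
  have hopK: "hop a v c = (\<lambda>_. 0)" if "supp K c" for c :: "nat set \<Rightarrow> 'k"
  proof (rule ext)
    fix G
    show "hop a v c G = 0"
    proof (cases "a \<in> G \<and> v \<in> G \<and> c (G - {a}) \<noteq> 0")
      case True
      then have "G - {a} \<in> K" using that by (auto simp: supp_def)
      then have "v \<notin> G - {a}" by (rule iii)
      then show ?thesis using True av by auto
    next
      case False
      then show ?thesis by (auto simp: hop_def)
    qed
  qed
  have hop_ch: "hop a v c \<in> chains L (e+1)" if "c \<in> chains L e" for c :: "nat set \<Rightarrow> 'k" and e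
    unfolding chains_def
  proof (intro CollectI allI impI)
    fix G assume nz: "hop a v c G \<noteq> 0"
    then have aG: "a \<in> G" "v \<in> G" and cz: "c (G - {a}) \<noteq> 0" by (auto simp: hop_def split: if_splits)
    then have H: "G - {a} \<in> L" "int (card (G - {a})) = e + 1" using that by (auto simp: chains_def)
    have "v \<in> G - {a}" using aG av by auto
    then have "insert a (G - {a}) \<in> L" using i H by blast
    then have GL: "G \<in> L" using aG by (simp add: insert_absorb)
    have fG: "finite G" using GL fin by (meson Union_upper finite_subset)
    have "card G = Suc (card (G - {a}))" by (rule card.remove[OF fG aG(1)])
    then show "G \<in> L \<and> int (card G) = e + 1 + 1" using GL H by simp
  qed
  have bdch: "bd L c \<in> chains L (e - 1)" if "c \<in> chains L e" for c :: "nat set \<Rightarrow> 'k" and e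
  proof -
    have "c \<in> chains L (e - 1 + 1)" using that by simp
    then show ?thesis by (rule bd_chains[OF fin])
  qed
  have rchL: "r c \<in> chains L e" if "c \<in> chains L e" for c :: "nat set \<Rightarrow> 'k" and e
  proof -
    have c1: "bd L (hop a v c) \<in> chains L e" using bd_chains[OF fin hop_ch[OF that]] .
    have "hop a v (bd L c) \<in> chains L (e - 1 + 1)" using hop_ch[OF bdch[OF that]] .
    then have c2: "hop a v (bd L c) \<in> chains L e" by simp
    show ?thesis unfolding r_def by (rule chains_diff[OF chains_diff[OF that c1] c2])
  qed
  have rch: "r c \<in> chains K e" if "c \<in> chains L e" for c :: "nat set \<Rightarrow> 'k" and e
    unfolding chains_def
  proof (intro CollectI allI impI)
    fix G assume nz: "r c G \<noteq> 0"
    then have GL: "G \<in> L" "int (card G) = e + 1" using rchL[OF that] by (auto simp: chains_def)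
    have "v \<notin> G"
    proof
      assume "v \<in> G"
      then have "bd L (hop a v c) G + hop a v (bd L c) G = c G"
        using homotopy[OF dL fin av i chains_supp[OF that]] by blast
      then have "r c G = 0" unfolding r_def by (simp add: algebra_simps)
      then show False using nz by simp
    qed
    then show "G \<in> K \<and> int (card G) = e + 1" using ii GL by blast
  qed
  have rid: "r z = z" if "supp K z" for z :: "nat set \<Rightarrow> 'k"
  proof -
    have "hop a v (bd L z) = (\<lambda>_. 0)" using hopK[OF bd_supp] bdm[OF that] by simp
    then show ?thesis unfolding r_def hopK[OF that] bd_zero by simp
  qed
  have rbd: "r (bd L c) = bd L (r c)" if "c \<in> chains L e" for c :: "nat set \<Rightarrow> 'k" and e
  proof -
    have z1: "bd L (bd L c) = (\<lambda>_. 0)" by (rule bdbd[OF dL fin chains_supp[OF that]])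
    have z2: "bd L (bd L (hop a v c)) = (\<lambda>_. 0)" by (rule bdbd[OF dL fin chains_supp[OF hop_ch[OF that]]])
    show ?thesis unfolding r_def bd_diff z1 z2 hop_zero by simp
  qed
  have rdiff: "r (\<lambda>F. x F - y F) = (\<lambda>F. r x F - r y F)" for x y :: "nat set \<Rightarrow> 'k"
    unfolding r_def bd_diff hop_diff by (rule ext) (simp add: algebra_simps)
  show ?thesis
  proof (rule iso_gen[of K d L r])
    show "cycles K d \<subseteq> (cycles L d :: (nat set \<Rightarrow> 'k) set)"
    proof
      fix z :: "nat set \<Rightarrow> 'k" assume "z \<in> cycles K d"
      then have zc: "z \<in> chains K d" "bd K z = (\<lambda>_. 0)" by (auto simp: cycles_def)
      have "z \<in> chains L d" using zc(1) chains_mono[OF sub] by blast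
      moreover have "bd L z = (\<lambda>_. 0)" using bdm[OF chains_supp[OF zc(1)]] zc(2) by simp
      ultimately show "z \<in> cycles L d" by (simp add: cycles_def)
    qed
    show "boundaries K d \<subseteq> (boundaries L d :: (nat set \<Rightarrow> 'k) set)"
    proof
      fix b :: "nat set \<Rightarrow> 'k" assume "b \<in> boundaries K d"
      then obtain c where c: "c \<in> chains K (d+1)" "b = bd K c" by (auto simp: boundaries_def)
      then have "b = bd L c" using bdm[OF chains_supp[OF c(1)]] by simp
      then show "b \<in> boundaries L d" using c(1) chains_mono[OF sub] by (auto simp: boundaries_def)
    qed
    show "r z \<in> cycles K d" if "z \<in> cycles L d" for z :: "nat set \<Rightarrow> 'k"
    proof -
      have zc: "z \<in> chains L d" "bd L z = (\<lambda>_. 0)" using that by (auto simp: cycles_def)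
      have rc: "r z \<in> chains K d" by (rule rch[OF zc(1)])
      have "bd K (r z) = bd L (r z)" using bdm[OF chains_supp[OF rc]] by simp
      also have "\<dots> = r (bd L z)" using rbd[OF zc(1)] by simp
      also have "\<dots> = (\<lambda>_. 0)" unfolding zc(2) by (rule rid) (simp add: supp_def)
      finally show ?thesis using rc by (simp add: cycles_def)
    qed
    show "r b \<in> boundaries K d" if bB: "b \<in> boundaries L d" for b :: "nat set \<Rightarrow> 'k"
    proof -
      obtain c where c: "c \<in> chains L (d+1)" "b = bd L c" using bB by (auto simp: boundaries_def)
      have rc: "r c \<in> chains K (d+1)" by (rule rch[OF c(1)])
      have "r b = bd L (r c)" using rbd[OF c(1)] c(2) by simp
      also have "\<dots> = bd K (r c)" using bdm[OF chains_supp[OF rc]] .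
      finally show ?thesis using rc by (auto simp: boundaries_def)
    qed
    show "r z = z" if "z \<in> cycles K d" for z :: "nat set \<Rightarrow> 'k"
      using that by (intro rid chains_supp) (auto simp: cycles_def)
    show "(\<lambda>F. r z F - z F) \<in> boundaries L d" if "z \<in> cycles L d" for z :: "nat set \<Rightarrow> 'k"
    proof -
      have zc: "z \<in> chains L d" "bd L z = (\<lambda>_. 0)" using that by (auto simp: cycles_def)
      have "(\<lambda>F. r z F - z F) = bd L (\<lambda>F. - hop a v z F)"
        unfolding r_def zc(2) hop_zero bd_neg by simp
      moreover have "(\<lambda>F. - hop a v z F) \<in> chains L (d+1)" by (rule chains_neg[OF hop_ch[OF zc(1)]])
      ultimately show ?thesis by (auto simp: boundaries_def)
    qed
    show "r (\<lambda>F. x F - y F) = (\<lambda>F. r x F - r y F)" for x y :: "nat set \<Rightarrow> 'k" by (rule rdiff)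
  qed
qed


lemma hiso_trans:
  assumes "homology_iso TYPE('k::field) K1 d1 K2 d2" "homology_iso TYPE('k) K2 d2 K3 d3"
  shows "homology_iso TYPE('k) K1 d1 K3 d3"
proof -
  obtain f :: "(nat set \<Rightarrow> 'k) set \<Rightarrow> (nat set \<Rightarrow> 'k) set" where
    fb: "bij_betw f (reduced_homology K1 d1) (reduced_homology K2 d2)" and
    fa: "\<And>z w z' w'. z \<in> cycles K1 d1 \<Longrightarrow> w \<in> cycles K1 d1 \<Longrightarrow>
           z' \<in> cycles K2 d2 \<Longrightarrow> w' \<in> cycles K2 d2 \<Longrightarrow>
           f (hclass K1 d1 z) = hclass K2 d2 z' \<Longrightarrow>
           f (hclass K1 d1 w) = hclass K2 d2 w' \<Longrightarrow>
           f (hclass K1 d1 (\<lambda>F. z F + w F)) = hclass K2 d2 (\<lambda>F. z' F + w' F)" and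
    fs: "\<And>a z z'. z \<in> cycles K1 d1 \<Longrightarrow> z' \<in> cycles K2 d2 \<Longrightarrow>
           f (hclass K1 d1 z) = hclass K2 d2 z' \<Longrightarrow>
           f (hclass K1 d1 (\<lambda>F. a * z F)) = hclass K2 d2 (\<lambda>F. a * z' F)"
    using assms(1) unfolding homology_iso_def by blast
  obtain g :: "(nat set \<Rightarrow> 'k) set \<Rightarrow> (nat set \<Rightarrow> 'k) set" where
    gb: "bij_betw g (reduced_homology K2 d2) (reduced_homology K3 d3)" and
    ga: "\<And>z w z' w'. z \<in> cycles K2 d2 \<Longrightarrow> w \<in> cycles K2 d2 \<Longrightarrow>
           z' \<in> cycles K3 d3 \<Longrightarrow> w' \<in> cycles K3 d3 \<Longrightarrow>
           g (hclass K2 d2 z) = hclass K3 d3 z' \<Longrightarrow>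
           g (hclass K2 d2 w) = hclass K3 d3 w' \<Longrightarrow>
           g (hclass K2 d2 (\<lambda>F. z F + w F)) = hclass K3 d3 (\<lambda>F. z' F + w' F)" and
    gs: "\<And>a z z'. z \<in> cycles K2 d2 \<Longrightarrow> z' \<in> cycles K3 d3 \<Longrightarrow>
           g (hclass K2 d2 z) = hclass K3 d3 z' \<Longrightarrow>
           g (hclass K2 d2 (\<lambda>F. a * z F)) = hclass K3 d3 (\<lambda>F. a * z' F)"
    using assms(2) unfolding homology_iso_def by blast
  have fimg: "\<exists>z'\<in>cycles K2 d2. f (hclass K1 d1 z) = hclass K2 d2 z'" if "z \<in> cycles K1 d1" for z
  proof -
    have "hclass K1 d1 z \<in> reduced_homology K1 d1" using that by (simp add: reduced_homology_def)
    then have "f (hclass K1 d1 z) \<in> reduced_homology K2 d2" by (rule bij_betw_apply[OF fb])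
    then show ?thesis by (auto simp: reduced_homology_def)
  qed
  have b: "bij_betw (g \<circ> f) (reduced_homology K1 d1) (reduced_homology K3 d3)"
    by (rule bij_betw_trans[OF fb gb])
  have a: "(g \<circ> f) (hclass K1 d1 (\<lambda>F. z F + w F)) = hclass K3 d3 (\<lambda>F. z'' F + w'' F)"
    if h: "z \<in> cycles K1 d1" "w \<in> cycles K1 d1" "z'' \<in> cycles K3 d3" "w'' \<in> cycles K3 d3"
      "(g \<circ> f) (hclass K1 d1 z) = hclass K3 d3 z''" "(g \<circ> f) (hclass K1 d1 w) = hclass K3 d3 w''"
    for z w z'' w''
  proof -
    obtain z' where z': "z' \<in> cycles K2 d2" "f (hclass K1 d1 z) = hclass K2 d2 z'" using fimg[OF h(1)] by blast
    obtain w' where w': "w' \<in> cycles K2 d2" "f (hclass K1 d1 w) = hclass K2 d2 w'" using fimg[OF h(2)] by blast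
    have "f (hclass K1 d1 (\<lambda>F. z F + w F)) = hclass K2 d2 (\<lambda>F. z' F + w' F)"
      by (rule fa[OF h(1,2) z'(1) w'(1) z'(2) w'(2)])
    moreover have "g (hclass K2 d2 (\<lambda>F. z' F + w' F)) = hclass K3 d3 (\<lambda>F. z'' F + w'' F)"
      using ga[OF z'(1) w'(1) h(3,4)] h(5,6) z'(2) w'(2) by simp
    ultimately show ?thesis by simp
  qed
  have s: "(g \<circ> f) (hclass K1 d1 (\<lambda>F. c * z F)) = hclass K3 d3 (\<lambda>F. c * z'' F)"
    if h: "z \<in> cycles K1 d1" "z'' \<in> cycles K3 d3" "(g \<circ> f) (hclass K1 d1 z) = hclass K3 d3 z''"
    for c z z''
  proof -
    obtain z' where z': "z' \<in> cycles K2 d2" "f (hclass K1 d1 z) = hclass K2 d2 z'" using fimg[OF h(1)] by blast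
    have "f (hclass K1 d1 (\<lambda>F. c * z F)) = hclass K2 d2 (\<lambda>F. c * z' F)"
      by (rule fs[OF h(1) z'(1) z'(2)])
    moreover have "g (hclass K2 d2 (\<lambda>F. c * z' F)) = hclass K3 d3 (\<lambda>F. c * z'' F)"
      using gs[OF z'(1) h(2)] h(3) z'(2) by simp
    ultimately show ?thesis by simp
  qed
  show ?thesis unfolding homology_iso_def
    apply (rule exI[of _ "g \<circ> f"])
    using b a s by blast
qed

lemma hiso_sym:
  assumes "homology_iso TYPE('k::field) K1 d1 K2 d2"
  shows "homology_iso TYPE('k) K2 d2 K1 d1"
proof -
  obtain f :: "(nat set \<Rightarrow> 'k) set \<Rightarrow> (nat set \<Rightarrow> 'k) set" where
    fb: "bij_betw f (reduced_homology K1 d1) (reduced_homology K2 d2)" and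
    fa: "\<And>z w z' w'. z \<in> cycles K1 d1 \<Longrightarrow> w \<in> cycles K1 d1 \<Longrightarrow>
           z' \<in> cycles K2 d2 \<Longrightarrow> w' \<in> cycles K2 d2 \<Longrightarrow>
           f (hclass K1 d1 z) = hclass K2 d2 z' \<Longrightarrow>
           f (hclass K1 d1 w) = hclass K2 d2 w' \<Longrightarrow>
           f (hclass K1 d1 (\<lambda>F. z F + w F)) = hclass K2 d2 (\<lambda>F. z' F + w' F)" and
    fs: "\<And>a z z'. z \<in> cycles K1 d1 \<Longrightarrow> z' \<in> cycles K2 d2 \<Longrightarrow>
           f (hclass K1 d1 z) = hclass K2 d2 z' \<Longrightarrow>
           f (hclass K1 d1 (\<lambda>F. a * z F)) = hclass K2 d2 (\<lambda>F. a * z' F)"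
    using assms(1) unfolding homology_iso_def by blast
  define g where "g = inv_into (reduced_homology K1 d1) f"
  have gb: "bij_betw g (reduced_homology K2 d2) (reduced_homology K1 d1)"
    unfolding g_def by (rule bij_betw_inv_into[OF fb])
  have RH: "hclass K d z \<in> reduced_homology K d" if "z \<in> cycles K d" for K d and z :: "nat set \<Rightarrow> 'k"
    using that by (simp add: reduced_homology_def)
  have bk: "f (hclass K1 d1 z) = hclass K2 d2 z'"
    if "z' \<in> cycles K2 d2" "g (hclass K2 d2 z') = hclass K1 d1 z" for z z'
    using bij_betw_inv_into_right[OF fb RH[OF that(1)]] that(2) unfolding g_def by simp
  have fwd: "g (f (hclass K1 d1 z)) = hclass K1 d1 z" if "z \<in> cycles K1 d1" for z
    unfolding g_def by (rule bij_betw_inv_into_left[OF fb RH[OF that]])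
  have a: "g (hclass K2 d2 (\<lambda>F. z F + w F)) = hclass K1 d1 (\<lambda>F. z' F + w' F)"
    if "z \<in> cycles K2 d2" "w \<in> cycles K2 d2" "z' \<in> cycles K1 d1" "w' \<in> cycles K1 d1"
      "g (hclass K2 d2 z) = hclass K1 d1 z'" "g (hclass K2 d2 w) = hclass K1 d1 w'"
    for z w z' w'
  proof -
    have "f (hclass K1 d1 (\<lambda>F. z' F + w' F)) = hclass K2 d2 (\<lambda>F. z F + w F)"
      by (rule fa[OF that(3,4,1,2) bk[OF that(1,5)] bk[OF that(2,6)]])
    then show ?thesis using fwd[OF cycles_add[OF that(3,4)]] by simp
  qed
  have s: "g (hclass K2 d2 (\<lambda>F. c * z F)) = hclass K1 d1 (\<lambda>F. c * z' F)"
    if "z \<in> cycles K2 d2" "z' \<in> cycles K1 d1" "g (hclass K2 d2 z) = hclass K1 d1 z'"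
    for c z z'
  proof -
    have "f (hclass K1 d1 (\<lambda>F. c * z' F)) = hclass K2 d2 (\<lambda>F. c * z F)"
      by (rule fs[OF that(2,1) bk[OF that(1,3)]])
    then show ?thesis using fwd[OF cycles_scale[where s=c, OF that(2)]] by simp
  qed
  show ?thesis unfolding homology_iso_def
    apply (rule exI[of _ g])
    using gb a s by blast
qed

lemma down_cone: "down (cone X \<Delta>)"
  by (auto simp: down_def cone_def)

lemma down_Un: "down K \<Longrightarrow> down L \<Longrightarrow> down (K \<union> L)"
  by (auto simp: down_def)

lemma cone_Union: "\<Union> (cone X \<Delta>) \<subseteq> X \<union> \<Union>\<Delta>"
  by (auto simp: cone_def facets_def)

lemma step_cone:
  assumes "finite X" "finite Y" "finite (\<Union>\<Delta>1)" "finite (\<Union>\<Delta>2)" "a \<in> X" "v \<notin> X" "v \<notin> Y"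
    "v \<notin> \<Union>\<Delta>1" "v \<notin> \<Union>\<Delta>2"
  shows "homology_iso TYPE('k::field) (cone X \<Delta>1 \<union> cone Y \<Delta>2) d (cone (insert v X) \<Delta>1 \<union> cone Y \<Delta>2) d"
proof (rule step_abs)
  show "down (cone X \<Delta>1 \<union> cone Y \<Delta>2)" by (intro down_Un down_cone)
  show "down (cone (insert v X) \<Delta>1 \<union> cone Y \<Delta>2)" by (intro down_Un down_cone)
  have "\<Union> (cone (insert v X) \<Delta>1 \<union> cone Y \<Delta>2) \<subseteq> (insert v X \<union> \<Union>\<Delta>1) \<union> (Y \<union> \<Union>\<Delta>2)"
    using cone_Union[of "insert v X" \<Delta>1] cone_Union[of Y \<Delta>2] by blast
  then show "finite (\<Union> (cone (insert v X) \<Delta>1 \<union> cone Y \<Delta>2))"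
    using assms(1-4) by (meson finite_Un finite_insert finite_subset)
  show "cone X \<Delta>1 \<union> cone Y \<Delta>2 \<subseteq> cone (insert v X) \<Delta>1 \<union> cone Y \<Delta>2"
    by (auto simp: cone_def)
  show "a \<noteq> v" using assms(5,6) by auto
  show "insert a G \<in> cone (insert v X) \<Delta>1 \<union> cone Y \<Delta>2"
    if "G \<in> cone (insert v X) \<Delta>1 \<union> cone Y \<Delta>2" "v \<in> G" for G
  proof -
    have "G \<notin> cone Y \<Delta>2" using that(2) assms(7,9) by (auto simp: cone_def facets_def)
    then have "G \<in> cone (insert v X) \<Delta>1" using that(1) by blast
    then show ?thesis using assms(5) by (auto simp: cone_def)
  qed
  show "G \<in> cone X \<Delta>1 \<union> cone Y \<Delta>2"
    if "G \<in> cone (insert v X) \<Delta>1 \<union> cone Y \<Delta>2" "v \<notin> G" for G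
    using that by (auto simp: cone_def)
  show "v \<notin> G" if "G \<in> cone X \<Delta>1 \<union> cone Y \<Delta>2" for G
    using that assms(6-9) by (auto simp: cone_def facets_def)
qed

lemma multi_add:
  assumes "finite S" "S \<noteq> {}"
  shows "finite X \<Longrightarrow> finite Y \<Longrightarrow> finite (\<Union>\<Delta>1) \<Longrightarrow> finite (\<Union>\<Delta>2) \<Longrightarrow> X \<noteq> {} \<Longrightarrow>
    S \<inter> X = {} \<Longrightarrow> S \<inter> Y = {} \<Longrightarrow> S \<inter> \<Union>\<Delta>1 = {} \<Longrightarrow> S \<inter> \<Union>\<Delta>2 = {} \<Longrightarrow>
    homology_iso TYPE('k::field) (cone X \<Delta>1 \<union> cone Y \<Delta>2) d (cone (X \<union> S) \<Delta>1 \<union> cone Y \<Delta>2) d"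
  using assms
proof (induction S rule: finite_ne_induct)
  case (singleton x)
  obtain a where "a \<in> X" using singleton by blast
  moreover have "X \<union> {x} = insert x X" by auto
  ultimately show ?case using singleton by (auto intro!: step_cone)
next
  case (insert x S)
  have IH: "homology_iso TYPE('k) (cone X \<Delta>1 \<union> cone Y \<Delta>2) d (cone (X \<union> S) \<Delta>1 \<union> cone Y \<Delta>2) d"
    using insert by auto
  obtain a where "a \<in> X" using insert by blast
  then have st: "homology_iso TYPE('k) (cone (X \<union> S) \<Delta>1 \<union> cone Y \<Delta>2) d (cone (insert x (X \<union> S)) \<Delta>1 \<union> cone Y \<Delta>2) d"
    using insert by (intro step_cone) auto
  have "X \<union> insert x S = insert x (X \<union> S)" by auto
  then show ?case using hiso_trans[OF IH st] by simp
qed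


lemma reduce:
  assumes sc1: "simplicial_complex n \<Delta>1" and sc2: "simplicial_complex n \<Delta>2"
    and A: "A \<subseteq> {1..n}" and B: "B \<subseteq> {1..n}" and An: "A \<noteq> {}" and Bn: "B \<noteq> {}"
    and AB: "A \<inter> B = {}" and V: "(A \<union> B) \<inter> vertex_set (\<Delta>1 \<union> \<Delta>2) = {}"
    and N: "N > n" and M: "M > n" and NM: "N \<noteq> M"
  shows "homology_iso TYPE('k::field) (cone A \<Delta>1 \<union> cone B \<Delta>2) d (cone {N} \<Delta>1 \<union> cone {M} \<Delta>2) d"
proof -
  have U1: "\<Union>\<Delta>1 \<subseteq> {1..n}" using sc1 by (auto simp: simplicial_complex_def)
  have U2: "\<Union>\<Delta>2 \<subseteq> {1..n}" using sc2 by (auto simp: simplicial_complex_def)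
  have f1: "finite (\<Union>\<Delta>1)" by (rule finite_subset[OF U1]) simp
  have f2: "finite (\<Union>\<Delta>2)" by (rule finite_subset[OF U2]) simp
  have fA: "finite A" by (rule finite_subset[OF A]) simp
  have fB: "finite B" by (rule finite_subset[OF B]) simp
  have d: "A \<inter> \<Union>\<Delta>1 = {}" "A \<inter> \<Union>\<Delta>2 = {}" "B \<inter> \<Union>\<Delta>1 = {}" "B \<inter> \<Union>\<Delta>2 = {}"
    using V unfolding vertex_set_def by auto
  have nN: "N \<notin> A" "N \<notin> B" "N \<notin> \<Union>\<Delta>1" "N \<notin> \<Union>\<Delta>2"
    using A B U1 U2 N by force+
  have nM: "M \<notin> A" "M \<notin> B" "M \<notin> \<Union>\<Delta>1" "M \<notin> \<Union>\<Delta>2"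
    using A B U1 U2 M by force+
  have s1: "homology_iso TYPE('k) (cone A \<Delta>1 \<union> cone B \<Delta>2) d (cone (A \<union> {N}) \<Delta>1 \<union> cone B \<Delta>2) d"
    by (rule multi_add) (use fA fB f1 f2 An nN in auto)
  have s2: "homology_iso TYPE('k) (cone {N} \<Delta>1 \<union> cone B \<Delta>2) d (cone ({N} \<union> A) \<Delta>1 \<union> cone B \<Delta>2) d"
    by (rule multi_add) (use fA fB f1 f2 An nN AB d in auto)
  have s3: "homology_iso TYPE('k) (cone B \<Delta>2 \<union> cone {N} \<Delta>1) d (cone (B \<union> {M}) \<Delta>2 \<union> cone {N} \<Delta>1) d"
    by (rule multi_add) (use fA fB f1 f2 Bn nM NM in auto)
  have s4: "homology_iso TYPE('k) (cone {M} \<Delta>2 \<union> cone {N} \<Delta>1) d (cone ({M} \<union> B) \<Delta>2 \<union> cone {N} \<Delta>1) d"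
    by (rule multi_add) (use fA fB f1 f2 Bn nM nN d in auto)
  have e1: "cone {N} \<Delta>1 \<union> cone B \<Delta>2 = cone B \<Delta>2 \<union> cone {N} \<Delta>1" by (rule Un_commute)
  have e2: "cone {N} \<Delta>1 \<union> cone (B \<union> {M}) \<Delta>2 = cone (B \<union> {M}) \<Delta>2 \<union> cone {N} \<Delta>1" by (rule Un_commute)
  have e3: "cone {N} \<Delta>1 \<union> cone {M} \<Delta>2 = cone {M} \<Delta>2 \<union> cone {N} \<Delta>1" by (rule Un_commute)
  have e4: "{M} \<union> B = B \<union> {M}" by auto
  have e5: "{N} \<union> A = A \<union> {N}" by auto
  have s2': "homology_iso TYPE('k) (cone (A \<union> {N}) \<Delta>1 \<union> cone B \<Delta>2) d (cone {N} \<Delta>1 \<union> cone B \<Delta>2) d"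
    using hiso_sym[OF s2] unfolding e5 .
  have s3': "homology_iso TYPE('k) (cone {N} \<Delta>1 \<union> cone B \<Delta>2) d (cone {N} \<Delta>1 \<union> cone (B \<union> {M}) \<Delta>2) d"
    using s3 unfolding e1 e2 .
  have s4': "homology_iso TYPE('k) (cone {N} \<Delta>1 \<union> cone (B \<union> {M}) \<Delta>2) d (cone {N} \<Delta>1 \<union> cone {M} \<Delta>2) d"
    using hiso_sym[OF s4] unfolding e2 e3 e4 .
  show ?thesis using hiso_trans[OF hiso_trans[OF hiso_trans[OF s1 s2'] s3'] s4'] .
qed

theorem corollary3p2:
  fixes n :: nat and \<Delta>1 \<Delta>2 :: "nat set set" and A B A' B' :: "nat set"
  assumes "simplicial_complex n \<Delta>1" and "simplicial_complex n \<Delta>2"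
    and "A \<subseteq> {1..n}" "B \<subseteq> {1..n}" "A' \<subseteq> {1..n}" "B' \<subseteq> {1..n}"
    and "A \<noteq> {}" "B \<noteq> {}" "A' \<noteq> {}" "B' \<noteq> {}"
    and "A \<inter> B = {}" "A' \<inter> B' = {}"
    and "(A \<union> B) \<inter> vertex_set (\<Delta>1 \<union> \<Delta>2) = {}"
    and "(A' \<union> B') \<inter> vertex_set (\<Delta>1 \<union> \<Delta>2) = {}"
    and "i > 0"
  shows "homology_iso TYPE('k::field)
           (cone A \<Delta>1 \<union> cone B \<Delta>2) i (cone A' \<Delta>1 \<union> cone B' \<Delta>2) i"
proof -
  have r1: "homology_iso TYPE('k) (cone A \<Delta>1 \<union> cone B \<Delta>2) i (cone {n+1} \<Delta>1 \<union> cone {n+2} \<Delta>2) i"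
    by (rule reduce) (use assms in auto)
  have r2: "homology_iso TYPE('k) (cone A' \<Delta>1 \<union> cone B' \<Delta>2) i (cone {n+1} \<Delta>1 \<union> cone {n+2} \<Delta>2) i"
    by (rule reduce) (use assms in auto)
  show ?thesis by (rule hiso_trans[OF r1 hiso_sym[OF r2]])
qed

end
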